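(* Let $0<\varepsilon<1/4$ and $r=(10/\varepsilon^2)\log(1/\varepsilon)$. Let $G$ be a bipartite graph with at least one edge, and let $H$ be a balanced bipartite subgraph of $G$ with parts $A,B$, $|A|=|B|=m$, that maximizes $\Phi(F)=d_F^{\,r}\,v(F)$ over all balanced bipartite subgraphs $F$ of $G$. Assume $\varepsilon m$ is a positive integer. Let $A_1\subseteq A$, $B_1\subseteq B$ with $|A_1|=|B_1|=\varepsilon m$, and put $A_2=A\setminus A_1$, $B_2=B\setminus B_1$. Then $$d(A_2,B_2)< d_H\,(1+\varepsilon^3/3).$$
   Context: $\log$ is the natural logarithm; $v(F)$ is the number of vertices of $F$. A bipartite graph is balanced if its two parts have equal size. For disjoint vertex sets $X,Y$, $d(X,Y)=e(X,Y)/(|X|\,|Y|)$ (number of edges between $X$ and $Y$ divided by $|X||Y|$); the density $d_F$ of a bipartite graph $F$ is this quantity for its two parts. *)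

theory Defs
  imports Complex_Main
begin

definition graph :: "'a set \<Rightarrow> ('a \<Rightarrow> 'a \<Rightarrow> bool) \<Rightarrow> bool" where
  "graph V E \<longleftrightarrow> finite V \<and> (\<forall>u v. E u v \<longrightarrow> E v u) \<and> (\<forall>u. \<not> E u u)
     \<and> (\<forall>u v. E u v \<longrightarrow> u \<in> V \<and> v \<in> V)"

definition bipartite_graph :: "'a set \<Rightarrow> ('a \<Rightarrow> 'a \<Rightarrow> bool) \<Rightarrow> bool" where
  "bipartite_graph V E \<longleftrightarrow> graph V E \<and>
     (\<exists>X Y. X \<inter> Y = {} \<and> X \<union> Y = V \<and>
        (\<forall>u v. E u v \<longrightarrow> (u \<in> X \<and> v \<in> Y) \<or> (u \<in> Y \<and> v \<in> X)))"

definition eXY :: "('a \<Rightarrow> 'a \<Rightarrow> bool) \<Rightarrow> 'a set \<Rightarrow> 'a set \<Rightarrow> nat" where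
  "eXY E X Y = card {(x, y). x \<in> X \<and> y \<in> Y \<and> E x y}"

definition dens :: "('a \<Rightarrow> 'a \<Rightarrow> bool) \<Rightarrow> 'a set \<Rightarrow> 'a set \<Rightarrow> real" where
  "dens E X Y = real (eXY E X Y) / (real (card X) * real (card Y))"

definition balanced_bip_subgraph ::
  "'a set \<Rightarrow> ('a \<Rightarrow> 'a \<Rightarrow> bool) \<Rightarrow> 'a set \<Rightarrow> 'a set \<Rightarrow> ('a \<Rightarrow> 'a \<Rightarrow> bool) \<Rightarrow> bool" where
  "balanced_bip_subgraph V E A B F \<longleftrightarrow>
     A \<subseteq> V \<and> B \<subseteq> V \<and> A \<inter> B = {} \<and> card A = card B \<and>
     (\<forall>u v. F u v \<longrightarrow> F v u) \<and> (\<forall>u v. F u v \<longrightarrow> E u v) \<and>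
     (\<forall>u v. F u v \<longrightarrow> (u \<in> A \<and> v \<in> B) \<or> (u \<in> B \<and> v \<in> A))"

definition Phi :: "real \<Rightarrow> 'a set \<Rightarrow> 'a set \<Rightarrow> ('a \<Rightarrow> 'a \<Rightarrow> bool) \<Rightarrow> real" where
  "Phi r A B F = dens F A B powr r * real (card A + card B)"

end

theory Submission
  imports Defs
begin

lemma key:
  fixes e r :: real
  assumes "0 < e" "e < 1/4" "r = (10 / e\<^sup>2) * ln (1 / e)"
  shows "(1 - e) * (1 + e^3/3) powr r > 1"
proof -
  define x where "x = e^3/3"
  have e3: "e^3 \<le> 1" using assms by (intro power_le_one) auto
  have x0: "0 \<le> x" "x \<le> 1" using assms e3 unfolding x_def by auto
  have lx: "ln (1 + x) \<ge> x - x^2" using ln_one_plus_pos_lower_bound[OF x0] by simp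
  have le: "ln (1 - e) \<ge> - e - 2 * e^2" using ln_one_minus_pos_lower_bound[of e] assms by simp
  have L: "ln (1/e) \<ge> 1 - e" using ln_le_minus_one[of e] assms by (simp add: ln_div)
  have L0: "ln (1/e) \<ge> 3/4" using L assms by simp
  have "r * ln (1 + x) \<ge> (10 / e\<^sup>2) * (3/4) * (x - x^2)"
  proof -
    have "x - x^2 \<ge> 0" using x0 mult_left_le[of x x] by (simp add: power2_eq_square)
    moreover have "10 / e\<^sup>2 \<ge> 0" by simp
    ultimately have "(10 / e\<^sup>2) * (3/4) * (x - x^2) \<le> (10 / e\<^sup>2) * ln (1/e) * (x - x^2)"
      using L0 by (intro mult_right_mono mult_left_mono) auto
    also have "\<dots> \<le> (10 / e\<^sup>2) * ln (1/e) * ln (1 + x)"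
      using lx L0 by (intro mult_left_mono) auto
    finally show ?thesis using assms(3) by simp
  qed
  moreover have "(10 / e\<^sup>2) * (3/4) * (x - x^2) = e * (5/2) * (1 - e^3/3)"
    using assms(1) unfolding x_def by (simp add: field_simps power2_eq_square power3_eq_cube)
  moreover have "e * (5/2) * (1 - e^3/3) > e + 2 * e^2"
  proof -
    have "e^3 \<le> (1/4)^3" using assms by (intro power_mono) auto
    then have t: "e^3 \<le> 1/64" by (simp add: power_divide)
    have h: "(5/2) * (1 - e^3/3) - 1 - 2 * e > 0" using assms(2) t by (simp add: field_simps)
    have "e * ((5/2) * (1 - e^3/3) - 1 - 2 * e) > 0" using h assms(1) by simp
    then show ?thesis by (simp add: power2_eq_square algebra_simps)
  qed
  ultimately have pos: "r * ln (1 + x) + ln (1 - e) > 0" using le by linarith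
  have "(1 + x) powr r = exp (r * ln (1 + x))" using x0 by (simp add: powr_def)
  moreover have "1 - e = exp (ln (1 - e))" using assms by simp
  ultimately have "(1 - e) * (1 + x) powr r = exp (r * ln (1 + x) + ln (1 - e))"
    by (simp add: exp_add)
  also have "\<dots> > 1" using pos by simp
  finally show ?thesis unfolding x_def .
qed

lemma eXY_mono_restr:
  assumes "\<And>x y. x \<in> X \<Longrightarrow> y \<in> Y \<Longrightarrow> F x y = H x y"
  shows "eXY F X Y = eXY H X Y"
  unfolding eXY_def using assms by (metis (no_types, lifting))

theorem lemma3p4:
  fixes V :: "'a set" and E H :: "'a \<Rightarrow> 'a \<Rightarrow> bool"
    and A B A1 B1 :: "'a set" and \<epsilon> r :: real and m k :: nat
  assumes eps: "0 < \<epsilon>" "\<epsilon> < 1/4"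
    and r_def: "r = (10 / \<epsilon>\<^sup>2) * ln (1 / \<epsilon>)"
    and G: "bipartite_graph V E" and edge: "\<exists>u v. E u v"
    and H: "balanced_bip_subgraph V E A B H"
    and m: "card A = m" "card B = m"
    and maxH: "\<And>A' B' F. balanced_bip_subgraph V E A' B' F \<Longrightarrow> Phi r A' B' F \<le> Phi r A B H"
    and k: "\<epsilon> * real m = real k" "k > 0"
    and A1: "A1 \<subseteq> A" "card A1 = k"
    and B1: "B1 \<subseteq> B" "card B1 = k"
  shows "dens H (A - A1) (B - B1) < dens H A B * (1 + \<epsilon>^3 / 3)"
proof -
  have m0: "m > 0" using k eps by (cases "m = 0") auto
  have finA: "finite A" and finB: "finite B" using m m0 card.infinite by force+
  have km: "real k < real m" using k eps m0 by (simp add: mult_less_cancel_right1 flip: k(1))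
  have HS: "\<And>u v. H u v \<Longrightarrow> H v u" using H unfolding balanced_bip_subgraph_def by blast
  have HE: "\<And>u v. H u v \<Longrightarrow> E u v" using H unfolding balanced_bip_subgraph_def by blast
  have HAB: "A \<subseteq> V" "B \<subseteq> V" "A \<inter> B = {}" using H unfolding balanced_bip_subgraph_def by auto
  obtain u v where uv: "E u v" using edge by blast
  have gr: "graph V E" using G unfolding bipartite_graph_def by blast
  have uvV: "u \<in> V" "v \<in> V" "u \<noteq> v" "E v u" using gr uv unfolding graph_def by metis+
  define F where "F = (\<lambda>x y. (x = u \<and> y = v) \<or> (x = v \<and> y = u))"
  have "balanced_bip_subgraph V E {u} {v} F"
    unfolding balanced_bip_subgraph_def F_def using uvV uv by auto
  hence "Phi r {u} {v} F \<le> Phi r A B H" by (rule maxH)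
  moreover have "{(x, y). x \<in> {u} \<and> y \<in> {v} \<and> F x y} = {(u, v)}" unfolding F_def by auto
  hence "Phi r {u} {v} F = 2" unfolding Phi_def dens_def eXY_def by simp
  ultimately have P2: "Phi r A B H \<ge> 2" by simp
  define d where "d = dens H A B"
  have d0: "d \<ge> 0" unfolding d_def dens_def by simp
  have dpos: "d > 0"
  proof (rule ccontr)
    assume "\<not> d > 0" hence "d = 0" using d0 by simp
    hence "Phi r A B H = 0" unfolding Phi_def d_def by simp
    thus False using P2 by simp
  qed
  define A2 where "A2 = A - A1"
  define B2 where "B2 = B - B1"
  have cA2: "card A2 = m - k" unfolding A2_def using A1 finA m by (simp add: card_Diff_subset finite_subset)
  have cB2: "card B2 = m - k" unfolding B2_def using B1 finB m by (simp add: card_Diff_subset finite_subset)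
  define F2 where "F2 = (\<lambda>x y. H x y \<and> ((x \<in> A2 \<and> y \<in> B2) \<or> (x \<in> B2 \<and> y \<in> A2)))"
  have "balanced_bip_subgraph V E A2 B2 F2"
    unfolding balanced_bip_subgraph_def F2_def using HAB HS HE cA2 cB2
    unfolding A2_def B2_def by auto
  hence P: "Phi r A2 B2 F2 \<le> Phi r A B H" by (rule maxH)
  have "eXY F2 A2 B2 = eXY H A2 B2" by (rule eXY_mono_restr) (simp add: F2_def)
  hence dF2: "dens F2 A2 B2 = dens H A2 B2" unfolding dens_def by simp
  define d2 where "d2 = dens H A2 B2"
  have d20: "d2 \<ge> 0" unfolding d2_def dens_def by simp
  define c where "c = 1 + \<epsilon>^3/3"
  have c1: "c \<ge> 1" unfolding c_def using eps by simp
  have r0: "r \<ge> 0" unfolding r_def using eps by simp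
  show ?thesis
  proof (rule ccontr)
    assume "\<not> ?thesis"
    hence ge: "d2 \<ge> d * c" unfolding d2_def d_def c_def A2_def B2_def by simp
    have "(d * c) powr r \<le> d2 powr r" using ge dpos c1 r0 by (intro powr_mono2) auto
    hence "d powr r * c powr r * (2 * (real m - real k)) \<le> d2 powr r * (2 * (real m - real k))"
      using km dpos c1 by (simp add: powr_mult)
    also have "\<dots> = Phi r A2 B2 F2" unfolding Phi_def dF2 d2_def using cA2 cB2 km by (simp add: of_nat_diff)
    also have "\<dots> \<le> d powr r * (2 * real m)" using P unfolding Phi_def d_def m by simp
    finally have "d powr r * (c powr r * (2 * (real m - real k))) \<le> d powr r * (2 * real m)" by (simp add: mult.assoc)
    hence "c powr r * (2 * (real m - real k)) \<le> 2 * real m" using dpos by simp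
    hence "c powr r * (real m - real k) \<le> real m" by (simp add: algebra_simps)
    hence "c powr r * (real m - real m * \<epsilon>) \<le> real m" using k(1) by (simp add: mult.commute)
    hence "real m * ((1 - \<epsilon>) * c powr r) \<le> real m * 1" by (simp add: algebra_simps)
    hence "(1 - \<epsilon>) * c powr r \<le> 1" using m0 by simp
    moreover have "(1 - \<epsilon>) * c powr r > 1" unfolding c_def by (rule key[OF eps r_def])
    ultimately show False by simp
  qed
qed

end
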